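(* Let there be finitely many items with feature vectors $x_i\in\mathbb{R}^d$, a linear weight vector $w\in\mathbb{R}^d$, and a probability distribution $\mathcal{P}$ on pairs $p=(i,j)$ of items. Put $b_p^{(f)}=|x_{if}-x_{jf}|$ and let \[ \mathcal F_*=\{f:\ |w_f|>0\text{ and } \mathbb P_{p\sim\mathcal P}(b_p^{(f)}>0)>0\}. \] Assume $\mathcal P$ is supported on pairs with $\sum_{k\in\mathcal F_*}b_p^{(k)}>0$. For $u=(u_f)_{f\in\mathcal F_*}\in\mathbb{R}^{\mathcal F_*}$ define \[ \rho_p^{(f)}(u)=\frac{e^{u_f}b_p^{(f)}}{\sum_{k\in\mathcal F_*}e^{u_k}b_p^{(k)}},\qquad I_f(u)=\mathbb E_{p\sim\mathcal P}[\rho_p^{(f)}(u)],\qquad I(u)=(I_f(u))_{f\in\mathcal F_*}, \] \[ \Phi(u)=\mathbb E_{p\sim\mathcal P}\Big[\log\Big(\sum_{k\in\mathcal F_*}e^{u_k}b_p^{(k)}\Big)\Big], \] and the factor competition graph $G_{\mathcal P}=(\mathcal F_*,E_{\mathcal P})$ by $\{f,g\}\in E_{\mathcal P}\iff \mathbb P_{p\sim\mathcal P}(b_p^{(f)}b_p^{(g)}>0)>0$ (for $f\ne g$). Then: (1) $I(u)=\nabla\Phi(u)$ for all $u$. (2) The Jacobian $J(u)=\nabla^2\Phi(u)$ equals $\mathbb E_p[\operatorname{Diag}(\rho_p(u))-\rho_p(u)\rho_p(u)^\top]$; in particular for $f\ne g$, $J_{fg}(u)=-\mathbb E[\rho_p^{(f)}(u)\rho_p^{(g)}(u)]\le0$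 and $J_{ff}(u)=\sum_{g\ne f}\mathbb E[\rho_p^{(f)}(u)\rho_p^{(g)}(u)]$. Hence $J(u)$ is a symmetric positive-semidefinite Laplacian-type matrix (nonpositive off-diagonal entries, zero row sums) whose off-diagonal support is contained in $E_{\mathcal P}$. (3) For all $u,u'$, with $\Delta u=u'-u$, \[ \langle\Delta u,I(u')-I(u)\rangle=\int_0^1\Delta u^\top J(u+t\Delta u)\Delta u\,dt\ \ge 0. \] (4) $I(u')=I(u)$ if and only if $\Delta u$ is constant on every connected component of $G_{\mathcal P}$. In particular, if $G_{\mathcal P}$ is connected, then $I(u')=I(u)$ if and only if $u'=u+c\mathbf 1$ for some scalar $c$.
   Context: Interpretation: $u_f=\log|w_f|$ are log-absolute linear weights; $\rho_p^{(f)}(u)$ is then the local influence share $|w_f(x_{if}-x_{jf})|/\sum_k|w_k(x_{ik}-x_{jk})|$, $I(u)$ is the global influence structure, and $I(u')-I(u)$ is Influence Exchange. $\operatorname{Diag}(v)$ is the diagonal matrix with diagonal $v$, and $\mathbf 1$ is the all-ones vector. *)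

theory Defs
  imports "HOL-Probability.Probability"
begin

text \<open>Log-weights u are vectors in real^'d; only the coordinates in F_* matter.\<close>

definition bdiff :: "('i \<Rightarrow> real^'d) \<Rightarrow> 'i \<times> 'i \<Rightarrow> 'd \<Rightarrow> real" where
  "bdiff x p f = \<bar>x (fst p) $ f - x (snd p) $ f\<bar>"

definition Fstar :: "('i \<Rightarrow> real^'d) \<Rightarrow> real^'d \<Rightarrow> ('i \<times> 'i) pmf \<Rightarrow> 'd set" where
  "Fstar x w P = {f. \<bar>w $ f\<bar> > 0 \<and> measure_pmf.prob P {p. bdiff x p f > 0} > 0}"

definition rho :: "('i \<Rightarrow> real^'d) \<Rightarrow> real^'d \<Rightarrow> ('i \<times> 'i) pmf \<Rightarrow> real^'d \<Rightarrow> 'i \<times> 'i \<Rightarrow> 'd \<Rightarrow> real" where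
  "rho x w P u p f = exp (u $ f) * bdiff x p f / (\<Sum>k\<in>Fstar x w P. exp (u $ k) * bdiff x p k)"

definition Infl :: "('i \<Rightarrow> real^'d) \<Rightarrow> real^'d \<Rightarrow> ('i \<times> 'i) pmf \<Rightarrow> real^'d \<Rightarrow> 'd \<Rightarrow> real" where
  "Infl x w P u f = measure_pmf.expectation P (\<lambda>p. rho x w P u p f)"

definition Phi :: "('i \<Rightarrow> real^'d) \<Rightarrow> real^'d \<Rightarrow> ('i \<times> 'i) pmf \<Rightarrow> real^'d \<Rightarrow> real" where
  "Phi x w P u = measure_pmf.expectation P
      (\<lambda>p. ln (\<Sum>k\<in>Fstar x w P. exp (u $ k) * bdiff x p k))"

definition Jac :: "('i \<Rightarrow> real^'d) \<Rightarrow> real^'d \<Rightarrow> ('i \<times> 'i) pmf \<Rightarrow> real^'d \<Rightarrow> 'd \<Rightarrow> 'd \<Rightarrow> real" where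
  "Jac x w P u f g = measure_pmf.expectation P
      (\<lambda>p. (if f = g then rho x w P u p f else 0) - rho x w P u p f * rho x w P u p g)"

definition compete_edge :: "('i \<Rightarrow> real^'d) \<Rightarrow> real^'d \<Rightarrow> ('i \<times> 'i) pmf \<Rightarrow> 'd \<Rightarrow> 'd \<Rightarrow> bool" where
  "compete_edge x w P f g \<longleftrightarrow> f \<in> Fstar x w P \<and> g \<in> Fstar x w P \<and> f \<noteq> g \<and>
      measure_pmf.prob P {p. bdiff x p f * bdiff x p g > 0} > 0"

definition same_comp :: "('i \<Rightarrow> real^'d) \<Rightarrow> real^'d \<Rightarrow> ('i \<times> 'i) pmf \<Rightarrow> 'd \<Rightarrow> 'd \<Rightarrow> bool" where
  "same_comp x w P = (compete_edge x w P)\<^sup>*\<^sup>*"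

end

theory Submission
  imports Defs
begin


definition SS :: "'d set \<Rightarrow> ('d \<Rightarrow> real) \<Rightarrow> real^'d \<Rightarrow> real" where
  "SS F b u = (\<Sum>k\<in>F. exp (u $ k) * b k)"
definition rh :: "'d set \<Rightarrow> ('d \<Rightarrow> real) \<Rightarrow> real^'d \<Rightarrow> 'd \<Rightarrow> real" where
  "rh F b u f = exp (u $ f) * b f / SS F b u"

lemma SS_pos:
  assumes "finite F" "\<And>k. b k \<ge> 0" "(\<Sum>k\<in>F. b k) > 0"
  shows "SS F b u > 0"
proof -
  obtain k where k: "k \<in> F" "b k > 0"
    using assms by (metis not_less sum_nonpos)
  have "exp (u$k) * b k \<le> SS F b u" unfolding SS_def
    by (rule member_le_sum) (use assms k in auto)
  moreover have "exp (u$k) * b k > 0" using k by simp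
  ultimately show ?thesis by linarith
qed

lemma rh_nonneg: "(\<And>k. b k \<ge> 0) \<Longrightarrow> rh F b u f \<ge> 0"
  unfolding rh_def SS_def by (auto intro!: divide_nonneg_nonneg sum_nonneg)

lemma sum_rh:
  assumes "finite F" "\<And>k. b k \<ge> 0" "(\<Sum>k\<in>F. b k) > 0"
  shows "(\<Sum>f\<in>F. rh F b u f) = 1"
  using SS_pos[OF assms, of u] unfolding rh_def sum_divide_distrib[symmetric]
  by (simp add: SS_def)

lemma SS_deriv:
  assumes "finite F"
  shows "(SS F b has_derivative (\<lambda>h. \<Sum>k\<in>F. exp (u$k) * b k * h$k)) (at u)"
  unfolding SS_def
  by (auto intro!: derivative_eq_intros bounded_linear_imp_has_derivative[OF bounded_linear_vec_nth]
      simp: assms mult_ac)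

lemma ln_deriv:
  assumes "finite F" "\<And>k. b k \<ge> 0" "(\<Sum>k\<in>F. b k) > 0"
  shows "((\<lambda>u. ln (SS F b u)) has_derivative (\<lambda>h. \<Sum>f\<in>F. rh F b u f * h$f)) (at u)"
proof -
  have p: "SS F b u > 0" using SS_pos[OF assms] .
  show ?thesis
    apply (rule has_derivative_eq_rhs)
     apply (rule has_derivative_ln[OF p SS_deriv[OF assms(1)]])
    by (auto simp: rh_def fun_eq_iff divide_inverse[symmetric] sum_divide_distrib)
qed

lemma rh_deriv:
  assumes "finite F" "\<And>k. b k \<ge> 0" "(\<Sum>k\<in>F. b k) > 0"
  shows "((\<lambda>v. rh F b v f) has_derivative
     (\<lambda>h. rh F b u f * h$f - rh F b u f * (\<Sum>g\<in>F. rh F b u g * h$g))) (at u)"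
proof -
  have p: "SS F b u > 0" using SS_pos[OF assms] .
  have e: "((\<lambda>v. exp (v$f) * b f) has_derivative (\<lambda>h. exp (u$f) * b f * h$f)) (at u)"
    by (auto intro!: derivative_eq_intros bounded_linear_imp_has_derivative[OF bounded_linear_vec_nth])
  show ?thesis
    unfolding rh_def[abs_def]
    apply (rule has_derivative_eq_rhs)
     apply (rule has_derivative_divide[OF e SS_deriv[OF assms(1)]])
    using p
    by (auto simp: rh_def fun_eq_iff sum_distrib_left field_simps power2_eq_square sum_negf)
qed



lemma cheb_identity:
  fixes a e d :: "'d \<Rightarrow> real"
  assumes "finite F"
  shows "(\<Sum>f\<in>F. \<Sum>g\<in>F. a f * a g * (e f - e g) * (d f - d g)) =
    2 * ((\<Sum>g\<in>F. a g) * (\<Sum>f\<in>F. a f * e f * d f) - (\<Sum>f\<in>F. a f * e f) * (\<Sum>g\<in>F. a g * d g))"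
proof -
  have 1: "(\<Sum>f\<in>F. \<Sum>g\<in>F. a f * a g * (e f - e g) * (d f - d g)) =
     (\<Sum>f\<in>F. \<Sum>g\<in>F. a g * (a f * e f * d f)) - (\<Sum>f\<in>F. \<Sum>g\<in>F. a f * e f * (a g * d g))
     - (\<Sum>f\<in>F. \<Sum>g\<in>F. a g * e g * (a f * d f)) + (\<Sum>f\<in>F. \<Sum>g\<in>F. a f * (a g * e g * d g))"
    by (simp add: sum_subtractf[symmetric] sum.distrib[symmetric] algebra_simps)
  have 2: "(\<Sum>f\<in>F. \<Sum>g\<in>F. a g * e g * (a f * d f)) = (\<Sum>f\<in>F. \<Sum>g\<in>F. a f * e f * (a g * d g))"
    by (rule sum.swap)
  have 3: "(\<Sum>f\<in>F. \<Sum>g\<in>F. a f * (a g * e g * d g)) = (\<Sum>f\<in>F. \<Sum>g\<in>F. a g * (a f * e f * d f))"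
    by (rule sum.swap)
  show ?thesis unfolding 1 2 3 sum_product by simp
qed

lemma cheb_nonneg_terms:
  fixes a d :: "'d \<Rightarrow> real"
  assumes "\<And>k. a k \<ge> 0"
  shows "a f * a g * (exp (d f) - exp (d g)) * (d f - d g) \<ge> 0"
proof -
  have "(exp (d f) - exp (d g)) * (d f - d g) \<ge> 0"
    by (cases "d f \<le> d g") (auto intro: mult_nonpos_nonpos mult_nonneg_nonneg)
  then show ?thesis using assms
    by (metis mult.assoc mult_nonneg_nonneg)
qed

lemma rh_shift:
  assumes "finite F" "\<And>k. b k \<ge> 0" "(\<Sum>k\<in>F. b k) > 0"
  shows "(\<Sum>f\<in>F. d$f * (rh F b (u + d) f - rh F b u f)) =
     (\<Sum>f\<in>F. \<Sum>g\<in>F. (exp (u$f) * b f) * (exp (u$g) * b g) * (exp (d$f) - exp (d$g)) * (d$f - d$g))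
      / (2 * SS F b u * SS F b (u + d))"
proof -
  define a where "a k = exp (u$k) * b k" for k
  define e where "e k = exp (d$k)" for k
  have S: "SS F b u = (\<Sum>g\<in>F. a g)" unfolding SS_def a_def ..
  have T: "SS F b (u + d) = (\<Sum>f\<in>F. a f * e f)" unfolding SS_def a_def e_def
    by (simp add: exp_add mult_ac)
  have Sp: "SS F b u > 0" "SS F b (u+d) > 0" using SS_pos[OF assms] by auto
  have "(\<Sum>f\<in>F. d$f * (rh F b (u + d) f - rh F b u f)) =
     (\<Sum>f\<in>F. a f * e f * d$f) / SS F b (u + d) - (\<Sum>g\<in>F. a g * d$g) / SS F b u"
    unfolding rh_def a_def e_def
    by (simp add: sum_subtractf sum_divide_distrib right_diff_distrib exp_add mult_ac)
  also have "\<dots> = ((\<Sum>g\<in>F. a g) * (\<Sum>f\<in>F. a f * e f * d$f) - (\<Sum>f\<in>F. a f * e f) * (\<Sum>g\<in>F. a g * d$g))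
      / (SS F b u * SS F b (u + d))"
    using Sp unfolding S T by (simp add: field_simps)
  also have "\<dots> = (\<Sum>f\<in>F. \<Sum>g\<in>F. a f * a g * (e f - e g) * (d$f - d$g)) / (2 * SS F b u * SS F b (u + d))"
    unfolding cheb_identity[OF assms(1), of a e "\<lambda>k. d$k"] by (simp only: right_diff_distrib[symmetric] mult.assoc[of 2] mult_divide_mult_cancel_left_if) simp
  finally show ?thesis unfolding a_def e_def .
qed

lemma rh_shift_nonneg:
  assumes "finite F" "\<And>k. b k \<ge> 0" "(\<Sum>k\<in>F. b k) > 0"
  shows "(\<Sum>f\<in>F. d$f * (rh F b (u + d) f - rh F b u f)) \<ge> 0"
  unfolding rh_shift[OF assms]
  using SS_pos[OF assms] assms(2)
  by (intro divide_nonneg_pos sum_nonneg cheb_nonneg_terms[where d="\<lambda>k. d$k"]) auto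

lemma rh_shift_zero:
  assumes "finite F" "\<And>k. b k \<ge> 0" "(\<Sum>k\<in>F. b k) > 0"
    and z: "(\<Sum>f\<in>F. d$f * (rh F b (u + d) f - rh F b u f)) = 0"
    and fg: "f \<in> F" "g \<in> F" "b f > 0" "b g > 0"
  shows "d$f = d$g"
proof -
  let ?t = "\<lambda>f g. (exp (u$f) * b f) * (exp (u$g) * b g) * (exp (d$f) - exp (d$g)) * (d$f - d$g)"
  have nn: "\<And>f g. ?t f g \<ge> 0" using assms(2)
    by (intro cheb_nonneg_terms[where d="\<lambda>k. d$k"]) auto
  have "(\<Sum>f\<in>F. \<Sum>g\<in>F. ?t f g) = 0"
  proof -
    have "SS F b u \<noteq> 0" "SS F b (u+d) \<noteq> 0" using SS_pos[OF assms(1-3)] by (metis less_irrefl)+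
    then show ?thesis using z unfolding rh_shift[OF assms(1-3)] by simp
  qed
  then have "\<forall>f\<in>F. (\<Sum>g\<in>F. ?t f g) = 0"
    using assms(1) nn by (subst sum_nonneg_eq_0_iff[symmetric]) (auto intro: sum_nonneg)
  then have "(\<Sum>g\<in>F. ?t f g) = 0" using fg by blast
  then have "?t f g = 0" using fg assms(1) nn by (subst (asm) sum_nonneg_eq_0_iff) auto
  then have "(exp (d$f) - exp (d$g)) * (d$f - d$g) = 0" using fg by simp
  then show ?thesis by auto
qed

lemma rh_shift_const:
  assumes "finite F" "\<And>k. b k \<ge> 0" "(\<Sum>k\<in>F. b k) > 0"
    and c: "\<And>f g. f \<in> F \<Longrightarrow> g \<in> F \<Longrightarrow> b f > 0 \<Longrightarrow> b g > 0 \<Longrightarrow> d$f = d$g"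
    and f: "f \<in> F"
  shows "rh F b (u + d) f = rh F b u f"
proof -
  obtain k where k: "k \<in> F" "b k > 0"
    using assms by (metis not_less sum_nonpos)
  have e: "\<And>g. g \<in> F \<Longrightarrow> exp ((u+d)$g) * b g = exp (d$k) * (exp (u$g) * b g)"
  proof -
    fix g assume g: "g \<in> F"
    show "exp ((u+d)$g) * b g = exp (d$k) * (exp (u$g) * b g)"
    proof (cases "b g > 0")
      case True
      have "d$g = d$k" using c[OF g k(1) True k(2)] .
      then show ?thesis by (simp add: exp_add)
    next
      case False
      then have "b g = 0" using assms(2)[of g] by simp
      then show ?thesis by simp
    qed
  qed
  have T: "SS F b (u+d) = exp (d$k) * SS F b u"
    unfolding SS_def by (simp only: sum_distrib_left) (rule sum.cong[OF refl e])
  show ?thesis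
  proof (cases "b f > 0")
    case True
    then show ?thesis unfolding rh_def T e[OF f] by simp
  next
    case False
    then have "b f = 0" using assms(2)[of f] by simp
    then show ?thesis by (simp add: rh_def)
  qed
qed



lemma E_sum:
  fixes P :: "('a::finite) pmf"
  shows "measure_pmf.expectation P g = (\<Sum>p\<in>set_pmf P. pmf P p * g p)"
  by (subst integral_measure_pmf_real[of "set_pmf P"]) (auto simp: mult.commute)

lemma delta_sum:
  fixes r h :: "'d \<Rightarrow> real"
  assumes "finite F" "f \<in> F"
  shows "(\<Sum>g\<in>F. ((if f = g then r f else 0) - r f * r g) * h g) = r f * h f - r f * (\<Sum>g\<in>F. r g * h g)"
proof -
  have "(\<Sum>g\<in>F. ((if f = g then r f else 0) - r f * r g) * h g) =
     (\<Sum>g\<in>F. (if f = g then r f * h g else 0)) - (\<Sum>g\<in>F. r f * (r g * h g))"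
  proof -
    have "(\<Sum>g\<in>F. ((if f = g then r f else 0) - r f * r g) * h g) =
      (\<Sum>g\<in>F. (if f = g then r f * h g else 0) - r f * (r g * h g))"
      by (rule sum.cong) (auto simp: algebra_simps)
    also have "\<dots> = (\<Sum>g\<in>F. (if f = g then r f * h g else 0)) - (\<Sum>g\<in>F. r f * (r g * h g))"
      by (rule sum_subtractf)
    finally show ?thesis .
  qed
  also have "\<dots> = r f * h f - r f * (\<Sum>g\<in>F. r g * h g)"
    using assms by (simp add: sum_distrib_left)
  finally show ?thesis .
qed

lemma var_nonneg:
  fixes r v :: "'d \<Rightarrow> real"
  assumes "finite F" "\<And>f. r f \<ge> 0" "(\<Sum>f\<in>F. r f) = 1"
  shows "(\<Sum>f\<in>F. r f * v f * v f) - (\<Sum>f\<in>F. r f * v f)^2 \<ge> 0"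
proof -
  define m where "m = (\<Sum>f\<in>F. r f * v f)"
  have "0 \<le> (\<Sum>f\<in>F. r f * (v f - m)^2)" using assms by (intro sum_nonneg) auto
  also have "(\<Sum>f\<in>F. r f * (v f - m)^2) =
      (\<Sum>f\<in>F. r f * v f * v f) - 2 * m * (\<Sum>f\<in>F. r f * v f) + m^2 * (\<Sum>f\<in>F. r f)"
    by (simp add: power2_eq_square algebra_simps sum.distrib sum_subtractf sum_distrib_left)
  finally show ?thesis using assms(3) unfolding m_def by (simp add: power2_eq_square)
qed

context
  fixes x :: "'i::finite \<Rightarrow> real^'d" and w :: "real^'d" and P :: "('i \<times> 'i) pmf"
  assumes supp: "\<forall>p\<in>set_pmf P. (\<Sum>k\<in>Fstar x w P. bdiff x p k) > 0"
begin

abbreviation "FF \<equiv> Fstar x w P"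
abbreviation "SP \<equiv> set_pmf P"
abbreviation "r u p f \<equiv> rh FF (bdiff x p) u f"

lemma finF: "finite FF" by simp
lemma finSP: "finite SP" by simp
lemma bnn: "bdiff x p k \<ge> 0" by (simp add: bdiff_def)
lemma rsupp: "p \<in> SP \<Longrightarrow> (\<Sum>k\<in>FF. bdiff x p k) > 0" using supp by blast

lemma rho_eq: "rho x w P u p f = r u p f"
  unfolding rho_def rh_def SS_def ..

lemma Phi_eq: "Phi x w P u = (\<Sum>p\<in>SP. pmf P p * ln (SS FF (bdiff x p) u))"
  unfolding Phi_def E_sum SS_def ..

lemma Infl_eq: "Infl x w P u f = (\<Sum>p\<in>SP. pmf P p * r u p f)"
  unfolding Infl_def E_sum rho_eq ..

lemma Jac_eq: "Jac x w P u f g = (\<Sum>p\<in>SP. pmf P p * ((if f = g then r u p f else 0) - r u p f * r u p g))"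
  unfolding Jac_def E_sum rho_eq ..

lemma prod_eq: "measure_pmf.expectation P (\<lambda>p. rho x w P u p f * rho x w P u p g)
   = (\<Sum>p\<in>SP. pmf P p * (r u p f * r u p g))"
  unfolding E_sum rho_eq ..

lemma rnn: "r u p f \<ge> 0" by (rule rh_nonneg[OF bnn])

lemma rsum: "p \<in> SP \<Longrightarrow> (\<Sum>f\<in>FF. r u p f) = 1"
  by (rule sum_rh[OF finF bnn rsupp])

lemma Phi_deriv: "(Phi x w P has_derivative (\<lambda>h. \<Sum>f\<in>FF. Infl x w P u f * h $ f)) (at u)"
proof -
  have "((\<lambda>u. \<Sum>p\<in>SP. pmf P p * ln (SS FF (bdiff x p) u)) has_derivative
      (\<lambda>h. \<Sum>p\<in>SP. pmf P p * (\<Sum>f\<in>FF. r u p f * h$f))) (at u)"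
    by (intro has_derivative_sum has_derivative_mult_right ln_deriv[OF finF bnn rsupp])
  then show ?thesis
    unfolding Phi_eq[abs_def] Infl_eq
    apply (rule has_derivative_eq_rhs)
    by (simp add: fun_eq_iff sum_distrib_left sum_distrib_right mult_ac sum.swap[of _ SP])
qed

lemma Infl_deriv: "f \<in> FF \<Longrightarrow> ((\<lambda>v. Infl x w P v f) has_derivative
              (\<lambda>h. \<Sum>g\<in>FF. Jac x w P u f g * h $ g)) (at u)"
proof -
  assume f: "f \<in> FF"
  have "((\<lambda>v. \<Sum>p\<in>SP. pmf P p * r v p f) has_derivative
      (\<lambda>h. \<Sum>p\<in>SP. pmf P p * (r u p f * h$f - r u p f * (\<Sum>g\<in>FF. r u p g * h$g)))) (at u)"
    by (intro has_derivative_sum has_derivative_mult_right rh_deriv[OF finF bnn rsupp])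
  moreover have "(\<lambda>h. \<Sum>p\<in>SP. pmf P p * (r u p f * h$f - r u p f * (\<Sum>g\<in>FF. r u p g * h$g)))
     = (\<lambda>h. \<Sum>g\<in>FF. Jac x w P u f g * h $ g)"
  proof
    fix h :: "real^'d"
    have "(\<Sum>g\<in>FF. Jac x w P u f g * h $ g) =
       (\<Sum>p\<in>SP. pmf P p * (\<Sum>g\<in>FF. ((if f = g then r u p f else 0) - r u p f * r u p g) * h$g))"
      unfolding Jac_eq by (simp add: sum_distrib_left sum_distrib_right mult_ac sum.swap[of _ SP])
    also have "\<dots> = (\<Sum>p\<in>SP. pmf P p * (r u p f * h$f - r u p f * (\<Sum>g\<in>FF. r u p g * h$g)))"
      by (simp add: delta_sum[OF finF f, where h="\<lambda>g. h$g"])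
    finally show "(\<Sum>p\<in>SP. pmf P p * (r u p f * h$f - r u p f * (\<Sum>g\<in>FF. r u p g * h$g)))
       = (\<Sum>g\<in>FF. Jac x w P u f g * h $ g)" ..
  qed
  ultimately show ?thesis unfolding Infl_eq[abs_def] by simp
qed


lemma Jac_off: "f \<noteq> g \<Longrightarrow> Jac x w P u f g = - measure_pmf.expectation P (\<lambda>p. rho x w P u p f * rho x w P u p g)
            \<and> Jac x w P u f g \<le> 0"
proof -
  assume fg: "f \<noteq> g"
  have 1: "Jac x w P u f g = - measure_pmf.expectation P (\<lambda>p. rho x w P u p f * rho x w P u p g)"
    unfolding Jac_eq prod_eq using fg by (simp add: sum_negf[symmetric])
  have "0 \<le> measure_pmf.expectation P (\<lambda>p. rho x w P u p f * rho x w P u p g)"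
    unfolding prod_eq by (intro sum_nonneg mult_nonneg_nonneg pmf_nonneg rnn)
  with 1 show ?thesis by simp
qed

lemma Jac_diag: "f \<in> FF \<Longrightarrow> Jac x w P u f f =
   (\<Sum>g\<in>FF - {f}. measure_pmf.expectation P (\<lambda>p. rho x w P u p f * rho x w P u p g))"
proof -
  assume f: "f \<in> FF"
  have "(\<Sum>g\<in>FF - {f}. measure_pmf.expectation P (\<lambda>p. rho x w P u p f * rho x w P u p g))
      = (\<Sum>p\<in>SP. pmf P p * (r u p f * (\<Sum>g\<in>FF - {f}. r u p g)))"
    unfolding prod_eq by (simp add: sum_distrib_left sum.swap[of _ SP])
  also have "\<dots> = (\<Sum>p\<in>SP. pmf P p * (r u p f - r u p f * r u p f))"
  proof (rule sum.cong[OF refl])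
    fix p assume p: "p \<in> SP"
    have h: "(\<Sum>g\<in>FF - {f}. r u p g) = 1 - r u p f"
      using rsum[OF p, of u] sum.remove[OF finF f, of "r u p"] by simp
    show "pmf P p * (r u p f * (\<Sum>g\<in>FF - {f}. r u p g)) = pmf P p * (r u p f - r u p f * r u p f)"
      by (subst h) (simp add: algebra_simps)
  qed
  finally show ?thesis unfolding Jac_eq by simp
qed

lemma Jac_sym: "Jac x w P u f g = Jac x w P u g f"
  unfolding Jac_eq by (rule sum.cong) (auto simp: mult.commute)

lemma Jac_quad: "(\<Sum>f\<in>FF. \<Sum>g\<in>FF. v f * Jac x w P u f g * v g) =
   (\<Sum>p\<in>SP. pmf P p * ((\<Sum>f\<in>FF. r u p f * v f * v f) - (\<Sum>f\<in>FF. r u p f * v f)^2))"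
proof -
  have "(\<Sum>f\<in>FF. \<Sum>g\<in>FF. v f * Jac x w P u f g * v g) =
      (\<Sum>p\<in>SP. pmf P p * (\<Sum>f\<in>FF. v f * (\<Sum>g\<in>FF. ((if f = g then r u p f else 0) - r u p f * r u p g) * v g)))"
    unfolding Jac_eq
    by (simp add: sum_distrib_left sum_distrib_right mult_ac sum.swap[of _ SP])
  also have "\<dots> = (\<Sum>p\<in>SP. pmf P p * (\<Sum>f\<in>FF. v f * (r u p f * v f - r u p f * (\<Sum>g\<in>FF. r u p g * v g))))"
    by (intro sum.cong refl arg_cong2[where f="(*)"]) (simp add: delta_sum[OF finF])
  also have "\<dots> = (\<Sum>p\<in>SP. pmf P p * ((\<Sum>f\<in>FF. r u p f * v f * v f) - (\<Sum>f\<in>FF. r u p f * v f)^2))"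
    by (simp add: right_diff_distrib sum_subtractf power2_eq_square sum_distrib_right mult_ac)
  finally show ?thesis .
qed

lemma Jac_psd: "0 \<le> (\<Sum>f\<in>FF. \<Sum>g\<in>FF. v f * Jac x w P u f g * v g)"
  unfolding Jac_quad
  by (intro sum_nonneg mult_nonneg_nonneg pmf_nonneg var_nonneg[OF finF] rnn rsum)

lemma Jac_row: "f \<in> FF \<Longrightarrow> (\<Sum>g\<in>FF. Jac x w P u f g) = 0"
proof -
  assume f: "f \<in> FF"
  have "(\<Sum>g\<in>FF. Jac x w P u f g) =
      (\<Sum>p\<in>SP. pmf P p * (\<Sum>g\<in>FF. ((if f = g then r u p f else 0) - r u p f * r u p g) * 1))"
    unfolding Jac_eq by (simp add: sum_distrib_left sum.swap[of _ SP])
  also have "\<dots> = (\<Sum>p\<in>SP. pmf P p * (r u p f * 1 - r u p f * (\<Sum>g\<in>FF. r u p g * 1)))"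
    using delta_sum[OF finF f, where h="\<lambda>_. (1::real)"] by simp
  also have "\<dots> = 0" by (intro sum.neutral) (simp add: rsum)
  finally show ?thesis .
qed

lemma Jac_supp: "f \<in> FF \<Longrightarrow> g \<in> FF \<Longrightarrow> f \<noteq> g \<Longrightarrow> Jac x w P u f g \<noteq> 0 \<Longrightarrow> compete_edge x w P f g"
proof -
  assume f: "f \<in> FF" and g: "g \<in> FF" and fg: "f \<noteq> g" and J: "Jac x w P u f g \<noteq> 0"
  have "(\<Sum>p\<in>SP. pmf P p * (r u p f * r u p g)) \<noteq> 0"
    using J Jac_off[OF fg, of u] unfolding prod_eq by simp
  then obtain p where p: "p \<in> SP" "pmf P p * (r u p f * r u p g) \<noteq> 0"
    by (meson sum.neutral)
  then have "bdiff x p f \<noteq> 0" "bdiff x p g \<noteq> 0" by (auto simp: rh_def)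
  then have "bdiff x p f * bdiff x p g > 0" using bnn[of p f] bnn[of p g] by simp
  then have "SP \<inter> {p. bdiff x p f * bdiff x p g > 0} \<noteq> {}" using p by blast
  then have "measure_pmf.prob P {p. bdiff x p f * bdiff x p g > 0} \<noteq> 0"
    by (simp add: measure_pmf_zero_iff)
  then have "measure_pmf.prob P {p. bdiff x p f * bdiff x p g > 0} > 0"
    using measure_nonneg[of P] by (simp add: order_less_le)
  then show ?thesis unfolding compete_edge_def using f g fg by simp
qed


lemma ftc: "((\<lambda>t. \<Sum>f\<in>FF. \<Sum>g\<in>FF.
              (u' - u) $ f * Jac x w P (u + t *\<^sub>R (u' - u)) f g * (u' - u) $ g)
          has_integral (\<Sum>f\<in>FF. (u' - u) $ f * (Infl x w P u' f - Infl x w P u f))) {0..1}"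
proof -
  define d where "d = u' - u"
  define H where "H t = (\<Sum>f\<in>FF. d$f * Infl x w P (u + t *\<^sub>R d) f)" for t
  have deriv: "(H has_vector_derivative (\<Sum>f\<in>FF. \<Sum>g\<in>FF. d$f * Jac x w P (u + t *\<^sub>R d) f g * d$g)) (at t)" for t
  proof -
    have lin: "((\<lambda>t. u + t *\<^sub>R d) has_derivative (\<lambda>s. s *\<^sub>R d)) (at t)"
      by (auto intro!: derivative_eq_intros)
    have "((\<lambda>t. Infl x w P (u + t *\<^sub>R d) f) has_derivative
        (\<lambda>s. \<Sum>g\<in>FF. Jac x w P (u + t *\<^sub>R d) f g * (s *\<^sub>R d)$g)) (at t)" if f: "f \<in> FF" for f
      using has_derivative_compose[OF lin Infl_deriv[OF f]] .
    then have "(H has_derivative (\<lambda>s. \<Sum>f\<in>FF. d$f * (\<Sum>g\<in>FF. Jac x w P (u + t *\<^sub>R d) f g * (s *\<^sub>R d)$g))) (at t)"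
      unfolding H_def[abs_def] by (intro has_derivative_sum has_derivative_mult_right)
    then show ?thesis unfolding has_vector_derivative_def
      by (rule has_derivative_eq_rhs) (simp add: fun_eq_iff sum_distrib_left mult_ac)
  qed
  have "((\<lambda>t. \<Sum>f\<in>FF. \<Sum>g\<in>FF. d$f * Jac x w P (u + t *\<^sub>R d) f g * d$g) has_integral H 1 - H 0) {0..1}"
    by (intro fundamental_theorem_of_calculus) (auto intro: has_vector_derivative_at_within deriv)
  moreover have "H 1 - H 0 = (\<Sum>f\<in>FF. (u' - u) $ f * (Infl x w P u' f - Infl x w P u f))"
    unfolding H_def d_def by (simp add: sum_subtractf right_diff_distrib)
  ultimately show ?thesis unfolding d_def by simp
qed

lemma shift_sum: "(\<Sum>f\<in>FF. (u' - u) $ f * (Infl x w P u' f - Infl x w P u f)) =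
   (\<Sum>p\<in>SP. pmf P p * (\<Sum>f\<in>FF. (u' - u) $ f * (r (u + (u' - u)) p f - r u p f)))"
  unfolding Infl_eq
  by (simp add: sum_subtractf[symmetric] right_diff_distrib[symmetric] sum_distrib_left
      sum_distrib_right mult_ac sum.swap[of _ SP])

lemma edge_eq:
  assumes "compete_edge x w P f g"
  shows "\<exists>p\<in>SP. f \<in> FF \<and> g \<in> FF \<and> bdiff x p f > 0 \<and> bdiff x p g > 0"
proof -
  have "measure_pmf.prob P {p. bdiff x p f * bdiff x p g > 0} \<noteq> 0" and fg: "f \<in> FF" "g \<in> FF"
    using assms unfolding compete_edge_def by auto
  then obtain p where p: "p \<in> SP" "bdiff x p f * bdiff x p g > 0"
    by (auto simp: measure_pmf_zero_iff)
  then have "bdiff x p f > 0 \<and> bdiff x p g > 0" using bnn[of p f] bnn[of p g]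
    by (metis less_eq_real_def mult_not_zero)
  then show ?thesis using p fg by blast
qed

lemma part4: "(\<forall>f\<in>FF. Infl x w P u' f = Infl x w P u f) \<longleftrightarrow>
        (\<forall>f\<in>FF. \<forall>g\<in>FF. same_comp x w P f g \<longrightarrow> (u' - u) $ f = (u' - u) $ g)"
proof
  let ?d = "u' - u"
  assume I: "\<forall>f\<in>FF. Infl x w P u' f = Infl x w P u f"
  let ?q = "\<lambda>p. (\<Sum>f\<in>FF. ?d $ f * (r (u + ?d) p f - r u p f))"
  have qnn: "p \<in> SP \<Longrightarrow> ?q p \<ge> 0" for p by (rule rh_shift_nonneg[OF finF bnn rsupp])
  have S0: "(\<Sum>p\<in>SP. pmf P p * ?q p) = 0"
    using I unfolding shift_sum[symmetric] by simp
  have nn: "0 \<le> pmf P p * ?q p" if "p \<in> SP" for p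
    by (intro mult_nonneg_nonneg pmf_nonneg qnn that)
  have "\<forall>p\<in>SP. pmf P p * ?q p = 0"
    using sum_nonneg_eq_0_iff[OF finSP, of "\<lambda>p. pmf P p * ?q p"] nn S0 by blast
  then have q0: "p \<in> SP \<Longrightarrow> ?q p = 0" for p using pmf_positive[of p P] by auto
  have edge: "compete_edge x w P f g \<Longrightarrow> ?d $ f = ?d $ g" for f g
  proof -
    assume "compete_edge x w P f g"
    then obtain p where p: "p\<in>SP" "f \<in> FF" "g \<in> FF" "bdiff x p f > 0" "bdiff x p g > 0"
      using edge_eq by blast
    show ?thesis by (rule rh_shift_zero[OF finF bnn rsupp[OF p(1)] q0[OF p(1)] p(2-5)])
  qed
  show "\<forall>f\<in>FF. \<forall>g\<in>FF. same_comp x w P f g \<longrightarrow> ?d $ f = ?d $ g"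
  proof (intro ballI impI)
    fix f g assume "same_comp x w P f g"
    then show "?d $ f = ?d $ g" unfolding same_comp_def
      by (induction rule: rtranclp_induct) (auto dest: edge)
  qed
next
  let ?d = "u' - u"
  assume C: "\<forall>f\<in>FF. \<forall>g\<in>FF. same_comp x w P f g \<longrightarrow> ?d $ f = ?d $ g"
  have "r (u + ?d) p f = r u p f" if p: "p \<in> SP" and f: "f \<in> FF" for p f
  proof (rule rh_shift_const[OF finF bnn rsupp[OF p] _ f])
    fix f g assume fg: "f \<in> FF" "g \<in> FF" "bdiff x p f > 0" "bdiff x p g > 0"
    show "?d $ f = ?d $ g"
    proof (cases "f = g")
      case False
      have "bdiff x p f * bdiff x p g > 0" using fg by simp
      then have "SP \<inter> {p. bdiff x p f * bdiff x p g > 0} \<noteq> {}" using p by blast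
      then have "measure_pmf.prob P {p. bdiff x p f * bdiff x p g > 0} \<noteq> 0"
        by (simp add: measure_pmf_zero_iff)
      then have "measure_pmf.prob P {p. bdiff x p f * bdiff x p g > 0} > 0"
        using measure_nonneg[of P] by (simp add: order_less_le)
      then have "compete_edge x w P f g" unfolding compete_edge_def using fg False by simp
      then have "same_comp x w P f g" unfolding same_comp_def by simp
      then show ?thesis using C fg by blast
    qed simp
  qed
  then show "\<forall>f\<in>FF. Infl x w P u' f = Infl x w P u f"
    unfolding Infl_eq by simp
qed

end
theorem theorem4p6:
  fixes x :: "'i::finite \<Rightarrow> real^'d" and w :: "real^'d" and P :: "('i \<times> 'i) pmf"
  assumes supp: "\<forall>p\<in>set_pmf P. (\<Sum>k\<in>Fstar x w P. bdiff x p k) > 0"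
  shows
   "(\<forall>u. (Phi x w P has_derivative (\<lambda>h. \<Sum>f\<in>Fstar x w P. Infl x w P u f * h $ f)) (at u))
    \<and> (\<forall>u.
        (\<forall>f\<in>Fstar x w P. ((\<lambda>v. Infl x w P v f) has_derivative
              (\<lambda>h. \<Sum>g\<in>Fstar x w P. Jac x w P u f g * h $ g)) (at u))
      \<and> (\<forall>f\<in>Fstar x w P. \<forall>g\<in>Fstar x w P. f \<noteq> g \<longrightarrow>
              Jac x w P u f g = - measure_pmf.expectation P (\<lambda>p. rho x w P u p f * rho x w P u p g)
            \<and> Jac x w P u f g \<le> 0)
      \<and> (\<forall>f\<in>Fstar x w P. Jac x w P u f f =
              (\<Sum>g\<in>Fstar x w P - {f}. measure_pmf.expectation P (\<lambda>p. rho x w P u p f * rho x w P u p g)))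
      \<and> (\<forall>f\<in>Fstar x w P. \<forall>g\<in>Fstar x w P. Jac x w P u f g = Jac x w P u g f)
      \<and> (\<forall>v :: 'd \<Rightarrow> real. 0 \<le> (\<Sum>f\<in>Fstar x w P. \<Sum>g\<in>Fstar x w P. v f * Jac x w P u f g * v g))
      \<and> (\<forall>f\<in>Fstar x w P. (\<Sum>g\<in>Fstar x w P. Jac x w P u f g) = 0)
      \<and> (\<forall>f\<in>Fstar x w P. \<forall>g\<in>Fstar x w P. f \<noteq> g \<and> Jac x w P u f g \<noteq> 0 \<longrightarrow> compete_edge x w P f g))
    \<and> (\<forall>u u'.
        ((\<lambda>t. \<Sum>f\<in>Fstar x w P. \<Sum>g\<in>Fstar x w P.
              (u' - u) $ f * Jac x w P (u + t *\<^sub>R (u' - u)) f g * (u' - u) $ g)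
          has_integral (\<Sum>f\<in>Fstar x w P. (u' - u) $ f * (Infl x w P u' f - Infl x w P u f))) {0..1}
      \<and> 0 \<le> (\<Sum>f\<in>Fstar x w P. (u' - u) $ f * (Infl x w P u' f - Infl x w P u f)))
    \<and> (\<forall>u u'. (\<forall>f\<in>Fstar x w P. Infl x w P u' f = Infl x w P u f) \<longleftrightarrow>
        (\<forall>f\<in>Fstar x w P. \<forall>g\<in>Fstar x w P. same_comp x w P f g \<longrightarrow> (u' - u) $ f = (u' - u) $ g))
    \<and> ((\<forall>f\<in>Fstar x w P. \<forall>g\<in>Fstar x w P. same_comp x w P f g) \<longrightarrow>
        (\<forall>u u'. (\<forall>f\<in>Fstar x w P. Infl x w P u' f = Infl x w P u f) \<longleftrightarrow>
          (\<exists>c. \<forall>f\<in>Fstar x w P. u' $ f = u $ f + c)))"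
  proof -
  have h3: "((\<lambda>t. \<Sum>f\<in>Fstar x w P. \<Sum>g\<in>Fstar x w P.
              (u' - u) $ f * Jac x w P (u + t *\<^sub>R (u' - u)) f g * (u' - u) $ g)
          has_integral (\<Sum>f\<in>Fstar x w P. (u' - u) $ f * (Infl x w P u' f - Infl x w P u f))) {0..1}
      \<and> 0 \<le> (\<Sum>f\<in>Fstar x w P. (u' - u) $ f * (Infl x w P u' f - Infl x w P u f))" for u u'
  proof
    show i: "((\<lambda>t. \<Sum>f\<in>Fstar x w P. \<Sum>g\<in>Fstar x w P.
              (u' - u) $ f * Jac x w P (u + t *\<^sub>R (u' - u)) f g * (u' - u) $ g)
          has_integral (\<Sum>f\<in>Fstar x w P. (u' - u) $ f * (Infl x w P u' f - Infl x w P u f))) {0..1}"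
      by (rule ftc[OF supp])
    show "0 \<le> (\<Sum>f\<in>Fstar x w P. (u' - u) $ f * (Infl x w P u' f - Infl x w P u f))"
      by (rule has_integral_nonneg[OF i]) (intro ballI Jac_psd[OF supp, where v="\<lambda>f. (u' - u) $ f"])
  qed
  have h5: "(\<forall>f\<in>Fstar x w P. \<forall>g\<in>Fstar x w P. same_comp x w P f g) \<longrightarrow>
        (\<forall>u u'. (\<forall>f\<in>Fstar x w P. Infl x w P u' f = Infl x w P u f) \<longleftrightarrow>
          (\<exists>c. \<forall>f\<in>Fstar x w P. u' $ f = u $ f + c))"
  proof (intro impI allI)
    fix u u' :: "real^'d"
    assume conn: "\<forall>f\<in>Fstar x w P. \<forall>g\<in>Fstar x w P. same_comp x w P f g"
    have "(\<forall>f\<in>Fstar x w P. Infl x w P u' f = Infl x w P u f) \<longleftrightarrow>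
        (\<forall>f\<in>Fstar x w P. \<forall>g\<in>Fstar x w P. (u' - u) $ f = (u' - u) $ g)"
    proof -
      have e: "(\<forall>f\<in>Fstar x w P. \<forall>g\<in>Fstar x w P. same_comp x w P f g \<longrightarrow> (u' - u) $ f = (u' - u) $ g)
         = (\<forall>f\<in>Fstar x w P. \<forall>g\<in>Fstar x w P. (u' - u) $ f = (u' - u) $ g)"
        using conn by blast
      show ?thesis unfolding part4[OF supp, of u' u] e ..
    qed
    also have "\<dots> \<longleftrightarrow> (\<exists>c. \<forall>f\<in>Fstar x w P. u' $ f = u $ f + c)"
    proof
      assume A: "\<forall>f\<in>Fstar x w P. \<forall>g\<in>Fstar x w P. (u' - u) $ f = (u' - u) $ g"
      show "\<exists>c. \<forall>f\<in>Fstar x w P. u' $ f = u $ f + c"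
      proof (cases "Fstar x w P = {}")
        case True then show ?thesis by simp
      next
        case False
        then obtain f0 where f0: "f0 \<in> Fstar x w P" by blast
        show ?thesis
        proof (rule exI[of _ "(u' - u) $ f0"], intro ballI)
          fix f assume f: "f \<in> Fstar x w P"
          have "(u' - u) $ f = (u' - u) $ f0" using A f f0 by blast
          then show "u' $ f = u $ f + (u' - u) $ f0" by simp
        qed
      qed
    next
      assume "\<exists>c. \<forall>f\<in>Fstar x w P. u' $ f = u $ f + c"
      then obtain c where c: "\<forall>f\<in>Fstar x w P. u' $ f = u $ f + c" ..
      show "\<forall>f\<in>Fstar x w P. \<forall>g\<in>Fstar x w P. (u' - u) $ f = (u' - u) $ g"
        using c by simp
    qed
    finally show "(\<forall>f\<in>Fstar x w P. Infl x w P u' f = Infl x w P u f) \<longleftrightarrow>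
          (\<exists>c. \<forall>f\<in>Fstar x w P. u' $ f = u $ f + c)" .
  qed
  have h2: "(\<forall>f\<in>Fstar x w P. ((\<lambda>v. Infl x w P v f) has_derivative
              (\<lambda>h. \<Sum>g\<in>Fstar x w P. Jac x w P u f g * h $ g)) (at u))
      \<and> (\<forall>f\<in>Fstar x w P. \<forall>g\<in>Fstar x w P. f \<noteq> g \<longrightarrow>
              Jac x w P u f g = - measure_pmf.expectation P (\<lambda>p. rho x w P u p f * rho x w P u p g)
            \<and> Jac x w P u f g \<le> 0)
      \<and> (\<forall>f\<in>Fstar x w P. Jac x w P u f f =
              (\<Sum>g\<in>Fstar x w P - {f}. measure_pmf.expectation P (\<lambda>p. rho x w P u p f * rho x w P u p g)))
      \<and> (\<forall>f\<in>Fstar x w P. \<forall>g\<in>Fstar x w P. Jac x w P u f g = Jac x w P u g f)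
      \<and> (\<forall>v :: 'd \<Rightarrow> real. 0 \<le> (\<Sum>f\<in>Fstar x w P. \<Sum>g\<in>Fstar x w P. v f * Jac x w P u f g * v g))
      \<and> (\<forall>f\<in>Fstar x w P. (\<Sum>g\<in>Fstar x w P. Jac x w P u f g) = 0)
      \<and> (\<forall>f\<in>Fstar x w P. \<forall>g\<in>Fstar x w P. f \<noteq> g \<and> Jac x w P u f g \<noteq> 0 \<longrightarrow> compete_edge x w P f g)" for u
  proof (intro conjI)
    show "\<forall>f\<in>Fstar x w P. ((\<lambda>v. Infl x w P v f) has_derivative
              (\<lambda>h. \<Sum>g\<in>Fstar x w P. Jac x w P u f g * h $ g)) (at u)"
      using Infl_deriv[OF supp] by blast
    show "\<forall>f\<in>Fstar x w P. \<forall>g\<in>Fstar x w P. f \<noteq> g \<longrightarrow>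
              Jac x w P u f g = - measure_pmf.expectation P (\<lambda>p. rho x w P u p f * rho x w P u p g)
            \<and> Jac x w P u f g \<le> 0"
      using Jac_off[OF supp] by blast
    show "\<forall>f\<in>Fstar x w P. Jac x w P u f f =
              (\<Sum>g\<in>Fstar x w P - {f}. measure_pmf.expectation P (\<lambda>p. rho x w P u p f * rho x w P u p g))"
      using Jac_diag[OF supp] by blast
    show "\<forall>f\<in>Fstar x w P. \<forall>g\<in>Fstar x w P. Jac x w P u f g = Jac x w P u g f"
      using Jac_sym[OF supp] by blast
    show "\<forall>v :: 'd \<Rightarrow> real. 0 \<le> (\<Sum>f\<in>Fstar x w P. \<Sum>g\<in>Fstar x w P. v f * Jac x w P u f g * v g)"
      using Jac_psd[OF supp] by blast
    show "\<forall>f\<in>Fstar x w P. (\<Sum>g\<in>Fstar x w P. Jac x w P u f g) = 0"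
      using Jac_row[OF supp] by blast
    show "\<forall>f\<in>Fstar x w P. \<forall>g\<in>Fstar x w P. f \<noteq> g \<and> Jac x w P u f g \<noteq> 0 \<longrightarrow> compete_edge x w P f g"
      using Jac_supp[OF supp] by blast
  qed
  show ?thesis
    apply (rule conjI, rule allI, rule Phi_deriv[OF supp])
    apply (rule conjI, rule allI, rule h2)
    apply (rule conjI, rule allI, rule allI, rule h3)
    apply (rule conjI, rule allI, rule allI, rule part4[OF supp])
    by (rule h5)
qed

end
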